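(* Let $S\subseteq\{0,1\}^n$ be the vertex set of an acute $0/1$-simplex in $[0,1]^n$ with $k$ vertices. If $\hat S$ is the vertex set of an acute $0/1$-simplex in $[0,1]^n$ having $\mathrm{conv}(S)$ as a facet (face), then each vertex of $\hat S$ belongs to $S$ or to $\mathcal{A}^n(S)$.
   Context: A set of $j+1$ affinely independent points $a_0,\dots,a_j\in\{0,1\}^n$ is the vertex set of an acute $0/1$-$j$-simplex if all dihedral angles of their convex hull are acute; equivalently, with $P=[a_1-a_0,\dots,a_j-a_0]$ and $G=P^\top P$, every off-diagonal entry of $G^{-1}$ is negative and every row sum of $G^{-1}$ is positive. For the vertex set $S$ of an acute $0/1$-simplex, $\mathcal{A}^n(S)$ is the set of all $v\in\{0,1\}^n$ such that $S\cup\{v\}$ is the vertex set of an acute $0/1$-simplex with one more vertex. Here a facet of a simplex means the convex hull of any nonempty subset of its vertices (a face of any dimension). *)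

theory Defs
  imports "HOL-Analysis.Analysis"
begin

definition zero_one_points :: "(real ^ 'n) set" where
  "zero_one_points = {x. \<forall>i. x $ i = 0 \<or> x $ i = 1}"

text \<open>Gram condition for an enumeration a 0, ..., a j of the vertices:
  with P = [a 1 - a 0, ..., a j - a 0] and G = P^T P, the matrix M is G^{-1}
  (M G = I on the j x j index range), every off-diagonal entry of M is negative
  and every row sum of M is positive.\<close>
definition gram_acute :: "(nat \<Rightarrow> real ^ 'n) \<Rightarrow> nat \<Rightarrow> bool" where
  "gram_acute a j \<longleftrightarrow>
     (let G = (\<lambda>i l. (a (Suc i) - a 0) \<bullet> (a (Suc l) - a 0)) in
      \<exists>M :: nat \<Rightarrow> nat \<Rightarrow> real.
        (\<forall>i<j. \<forall>l<j. (\<Sum>m<j. M i m * G m l) = (if i = l then 1 else 0)) \<and>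
        (\<forall>i<j. \<forall>l<j. i \<noteq> l \<longrightarrow> M i l < 0) \<and>
        (\<forall>i<j. (\<Sum>l<j. M i l) > 0))"

definition acute_01_simplex :: "(real ^ 'n) set \<Rightarrow> bool" where
  "acute_01_simplex S \<longleftrightarrow>
     finite S \<and> S \<noteq> {} \<and> S \<subseteq> zero_one_points \<and> \<not> affine_dependent S \<and>
     (\<exists>a. bij_betw a {0..card S - 1} S \<and> gram_acute a (card S - 1))"

definition acute_ext :: "(real ^ 'n) set \<Rightarrow> (real ^ 'n) set" where
  "acute_ext S = {v \<in> zero_one_points. v \<notin> S \<and> acute_01_simplex (insert v S)}"

end

theory Submission imports Defs begin
lemma span_sum_repr:
  fixes u :: "nat \<Rightarrow> 'a::euclidean_space"
  assumes "finite I" shows "x \<in> span (u ` I) \<Longrightarrow> \<exists>\<beta>. x = (\<Sum>m\<in>I. \<beta> m *\<^sub>R u m)"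
  using assms(1)
proof (induction I arbitrary: x rule: finite_induct)
  case empty then show ?case by simp
next
  case (insert i I)
  then obtain k where k: "x - k *\<^sub>R u i \<in> span (u ` I)"
    by (auto simp: span_breakdown_eq)
  from insert.IH[OF k] obtain \<beta> where b: "x - k *\<^sub>R u i = (\<Sum>m\<in>I. \<beta> m *\<^sub>R u m)" by blast
  have "x = (\<Sum>m\<in>insert i I. (\<beta>(i:=k)) m *\<^sub>R u m)"
    using insert.hyps b by (simp add: algebra_simps) (smt (verit) add.commute b diff_add_cancel fun_upd_other sum.cong)
  then show ?case by blast
qed

definition gram' :: "(nat \<Rightarrow> 'a::euclidean_space) \<Rightarrow> nat set \<Rightarrow> bool" where
 "gram' u I \<longleftrightarrow> (\<exists>M. (\<forall>i\<in>I. \<forall>l\<in>I. (\<Sum>m\<in>I. M i m * (u m \<bullet> u l)) = (if i = l then 1 else 0))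
     \<and> (\<forall>i\<in>I. \<forall>l\<in>I. i \<noteq> l \<longrightarrow> M i l < 0) \<and> (\<forall>i\<in>I. (\<Sum>l\<in>I. M i l) > 0))"

definition dacute :: "(nat \<Rightarrow> 'a::euclidean_space) \<Rightarrow> nat set \<Rightarrow> bool" where
 "dacute u I \<longleftrightarrow> (\<exists>d. (\<forall>i\<in>I. d i \<in> span (u ` I)) \<and> (\<forall>i\<in>I. \<forall>l\<in>I. d i \<bullet> u l = (if i = l then 1 else 0))
     \<and> (\<forall>i\<in>I. \<forall>l\<in>I. i \<noteq> l \<longrightarrow> d i \<bullet> d l < 0) \<and> (\<forall>i\<in>I. d i \<bullet> (\<Sum>l\<in>I. d l) > 0))"

lemma gram_acute_eq: "gram_acute a j = gram' (\<lambda>i. a (Suc i) - a 0) {..<j}"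
  unfolding gram_acute_def gram'_def Let_def by (simp only: Ball_def lessThan_iff)

lemma dual_coef:
  fixes u d :: "nat \<Rightarrow> 'a::euclidean_space"
  assumes "finite I" "i \<in> I" "\<forall>l\<in>I. d i \<bullet> u l = (if i = l then 1 else 0)"
    and "x = (\<Sum>m\<in>I. \<beta> m *\<^sub>R u m)"
  shows "d i \<bullet> x = \<beta> i"
proof -
  have "d i \<bullet> x = (\<Sum>m\<in>I. \<beta> m * (d i \<bullet> u m))" by (simp add: assms(4) inner_sum_right)
  also have "\<dots> = (\<Sum>m\<in>I. \<beta> m * (if i = m then 1 else 0))" using assms(3) by (intro sum.cong) auto
  also have "\<dots> = \<beta> i" using assms(1,2) by (simp add: if_distrib cong: if_cong)
  finally show ?thesis .
qed

lemma gram'_dacute: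
  fixes u :: "nat \<Rightarrow> 'a::euclidean_space"
  assumes fin: "finite I" shows "gram' u I \<longleftrightarrow> dacute u I"
proof
  assume "gram' u I"
  then obtain M where M1: "\<forall>i\<in>I. \<forall>l\<in>I. (\<Sum>m\<in>I. M i m * (u m \<bullet> u l)) = (if i = l then 1 else 0)"
    and M2: "\<forall>i\<in>I. \<forall>l\<in>I. i \<noteq> l \<longrightarrow> M i l < 0" and M3: "\<forall>i\<in>I. (\<Sum>l\<in>I. M i l) > 0"
    unfolding gram'_def by blast
  define d where "d i = (\<Sum>m\<in>I. M i m *\<^sub>R u m)" for i
  have D1: "\<forall>i\<in>I. d i \<in> span (u ` I)"
    unfolding d_def by (auto intro!: span_sum intro: span_mul span_base)
  have D2: "\<forall>i\<in>I. \<forall>l\<in>I. d i \<bullet> u l = (if i = l then 1 else 0)"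
    using M1 by (auto simp: d_def inner_sum_left mult.commute)
  have DD: "d i \<bullet> d l = M l i" if "i \<in> I" "l \<in> I" for i l
    using dual_coef[OF fin that(1) _ d_def[of l]] D2 that by auto
  have sym: "M l i = M i l" if "i \<in> I" "l \<in> I" for i l
    using DD[OF that] DD[OF that(2,1)] by (simp add: inner_commute)
  have D3: "\<forall>i\<in>I. \<forall>l\<in>I. i \<noteq> l \<longrightarrow> d i \<bullet> d l < 0"
    using DD M2 sym by auto
  have D4: "\<forall>i\<in>I. d i \<bullet> (\<Sum>l\<in>I. d l) > 0"
  proof
    fix i assume i: "i \<in> I"
    have "d i \<bullet> (\<Sum>l\<in>I. d l) = (\<Sum>l\<in>I. M i l)"
      by (simp add: inner_sum_right DD[OF i] sym[OF i])
    then show "d i \<bullet> (\<Sum>l\<in>I. d l) > 0" using M3 i by simp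
  qed
  show "dacute u I" unfolding dacute_def using D1 D2 D3 D4 by blast
next
  assume "dacute u I"
  then obtain d where D1: "\<forall>i\<in>I. d i \<in> span (u ` I)" and D2: "\<forall>i\<in>I. \<forall>l\<in>I. d i \<bullet> u l = (if i = l then 1 else 0)"
     and D3: "\<forall>i\<in>I. \<forall>l\<in>I. i \<noteq> l \<longrightarrow> d i \<bullet> d l < 0" and D4: "\<forall>i\<in>I. d i \<bullet> (\<Sum>l\<in>I. d l) > 0"
    unfolding dacute_def by blast
  have "\<forall>i\<in>I. \<exists>\<beta>. d i = (\<Sum>m\<in>I. \<beta> m *\<^sub>R u m)" using D1 span_sum_repr[OF fin] by blast
  then obtain M where M: "\<And>i. i \<in> I \<Longrightarrow> d i = (\<Sum>m\<in>I. M i m *\<^sub>R u m)" by metis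
  have DD: "d i \<bullet> d l = M l i" if "i \<in> I" "l \<in> I" for i l
    using dual_coef[OF fin that(1) _ M[OF that(2)]] D2 that by auto
  have sym: "M l i = M i l" if "i \<in> I" "l \<in> I" for i l
    using DD[OF that] DD[OF that(2,1)] by (simp add: inner_commute)
  have M1: "\<forall>i\<in>I. \<forall>l\<in>I. (\<Sum>m\<in>I. M i m * (u m \<bullet> u l)) = (if i = l then 1 else 0)"
  proof (intro ballI)
    fix i l assume "i \<in> I" "l \<in> I"
    then show "(\<Sum>m\<in>I. M i m * (u m \<bullet> u l)) = (if i = l then 1 else 0)"
    proof -
      assume il: "i \<in> I" "l \<in> I"
      have "(\<Sum>m\<in>I. M i m * (u m \<bullet> u l)) = d i \<bullet> u l"
        using M[OF il(1)] by (simp add: inner_sum_left)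
      then show ?thesis using D2 il by simp
    qed
  qed
  have M2: "\<forall>i\<in>I. \<forall>l\<in>I. i \<noteq> l \<longrightarrow> M i l < 0" using D3 DD sym by metis
  have M3: "\<forall>i\<in>I. (\<Sum>l\<in>I. M i l) > 0"
  proof
    fix i assume i: "i \<in> I"
    have "d i \<bullet> (\<Sum>l\<in>I. d l) = (\<Sum>l\<in>I. M i l)"
      by (simp add: inner_sum_right DD[OF i] sym[OF i])
    then show "(\<Sum>l\<in>I. M i l) > 0" using D4 i by metis
  qed
  show "gram' u I" unfolding gram'_def using M1 M2 M3 by blast
qed

lemma dacute_remove:
  fixes u :: "nat \<Rightarrow> 'a::euclidean_space"
  assumes fin: "finite I" and p: "p \<in> I" and da: "dacute u I"
  shows "dacute u (I - {p})"
proof -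
  obtain d where D1: "\<forall>i\<in>I. d i \<in> span (u ` I)" and D2: "\<forall>i\<in>I. \<forall>l\<in>I. d i \<bullet> u l = (if i = l then 1 else 0)"
     and D3: "\<forall>i\<in>I. \<forall>l\<in>I. i \<noteq> l \<longrightarrow> d i \<bullet> d l < 0" and D4: "\<forall>i\<in>I. d i \<bullet> (\<Sum>l\<in>I. d l) > 0"
    using da unfolding dacute_def by blast
  define c where "c = d p \<bullet> d p"
  have "d p \<bullet> u p = 1" using D2 p by simp
  then have "d p \<noteq> 0" by auto
  then have cpos: "c > 0" unfolding c_def by simp
  define e where "e i = d i - (d i \<bullet> d p / c) *\<^sub>R d p" for i
  have eperp: "d p \<bullet> e i = 0" for i
    using cpos by (simp add: e_def c_def inner_diff_right inner_commute)
  have E1: "\<forall>i\<in>I - {p}. e i \<in> span (u ` (I - {p}))"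
  proof
    fix i assume i: "i \<in> I - {p}"
    have "e i \<in> span (u ` I)" unfolding e_def using D1 i p by (auto intro!: span_diff span_mul)
    then obtain \<beta> where b: "e i = (\<Sum>m\<in>I. \<beta> m *\<^sub>R u m)" using span_sum_repr[OF fin] by blast
    have "d p \<bullet> e i = \<beta> p" using dual_coef[OF fin p _ b, of d] D2 p by auto
    then have "\<beta> p = 0" using eperp[of i] by simp
    then have "e i = (\<Sum>m\<in>I - {p}. \<beta> m *\<^sub>R u m)" using b fin p by (simp add: sum.remove)
    then show "e i \<in> span (u ` (I - {p}))" by (auto intro!: span_sum intro: span_mul span_base)
  qed
  have E2: "\<forall>i\<in>I - {p}. \<forall>l\<in>I - {p}. e i \<bullet> u l = (if i = l then 1 else 0)"
    using D2 p by (auto simp: e_def inner_diff_left)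
  have ee: "e i \<bullet> e l = d i \<bullet> d l - (d i \<bullet> d p) * (d l \<bullet> d p) / c" for i l
    using cpos by (simp add: e_def c_def inner_diff_left inner_diff_right inner_commute field_simps)
  have E3: "\<forall>i\<in>I - {p}. \<forall>l\<in>I - {p}. i \<noteq> l \<longrightarrow> e i \<bullet> e l < 0"
  proof (intro ballI impI)
    fix i l assume i: "i \<in> I - {p}" and l: "l \<in> I - {p}" and il: "i \<noteq> l"
    have "d i \<bullet> d p < 0" "d l \<bullet> d p < 0" using D3 i l p by auto
    then have "(d i \<bullet> d p) * (d l \<bullet> d p) / c > 0" using cpos by (simp add: mult_neg_neg)
    moreover have "d i \<bullet> d l < 0" using D3 i l il by auto
    ultimately show "e i \<bullet> e l < 0" using ee by simp
  qed
  define D where "D = (\<Sum>l\<in>I. d l)"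
  have Dsplit: "D = d p + (\<Sum>l\<in>I - {p}. d l)" unfolding D_def using fin p by (simp add: sum.remove)
  have Sum_e: "(\<Sum>l\<in>I - {p}. e l) = D - (D \<bullet> d p / c) *\<^sub>R d p"
  proof -
    have "(\<Sum>l\<in>I - {p}. e l) = (\<Sum>l\<in>I - {p}. d l) - (\<Sum>l\<in>I - {p}. (d l \<bullet> d p / c) *\<^sub>R d p)"
      unfolding e_def by (simp add: sum_subtractf)
    also have "(\<Sum>l\<in>I - {p}. (d l \<bullet> d p / c) *\<^sub>R d p) = ((\<Sum>l\<in>I - {p}. d l) \<bullet> d p / c) *\<^sub>R d p"
      by (simp add: scaleR_sum_left[symmetric] inner_sum_left sum_divide_distrib)
    also have "(\<Sum>l\<in>I - {p}. d l) = D - d p" using Dsplit by simp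
    finally have "(\<Sum>l\<in>I - {p}. e l) = D - d p - (((D - d p) \<bullet> d p) / c) *\<^sub>R d p" .
    moreover have "(((D - d p) \<bullet> d p) / c) *\<^sub>R d p = (D \<bullet> d p / c) *\<^sub>R d p - d p"
      using cpos by (simp add: inner_diff_left c_def diff_divide_distrib scaleR_diff_left)
    ultimately show ?thesis by simp
  qed
  have E4: "\<forall>i\<in>I - {p}. e i \<bullet> (\<Sum>l\<in>I - {p}. e l) > 0"
  proof
    fix i assume i: "i \<in> I - {p}"
    have "e i \<bullet> (\<Sum>l\<in>I - {p}. e l) = e i \<bullet> D"
      using eperp[of i] by (simp add: Sum_e inner_diff_right inner_commute)
    also have "\<dots> = d i \<bullet> D - (d i \<bullet> d p / c) * (d p \<bullet> D)" by (simp add: e_def inner_diff_left)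
    finally have eq: "e i \<bullet> (\<Sum>l\<in>I - {p}. e l) = d i \<bullet> D - (d i \<bullet> d p / c) * (d p \<bullet> D)" .
    have "d i \<bullet> D > 0" "d p \<bullet> D > 0" using D4 i p by (auto simp: D_def)
    moreover have "d i \<bullet> d p < 0" using D3 i p by auto
    ultimately have "(d i \<bullet> d p / c) * (d p \<bullet> D) < 0" using cpos by (simp add: mult_neg_pos divide_neg_pos)
    then show "e i \<bullet> (\<Sum>l\<in>I - {p}. e l) > 0" using eq \<open>d i \<bullet> D > 0\<close> by simp
  qed
  show ?thesis unfolding dacute_def using E1 E2 E3 E4 by blast
qed


lemma dacute_subset:
  fixes u :: "nat \<Rightarrow> 'a::euclidean_space"
  assumes "finite R" shows "R \<subseteq> I \<Longrightarrow> finite I \<Longrightarrow> dacute u I \<Longrightarrow> dacute u (I - R)"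
  using assms
proof (induction R rule: finite_induct)
  case empty then show ?case by simp
next
  case (insert x R)
  have "dacute u (I - R)" using insert by auto
  moreover have "x \<in> I - R" using insert by auto
  ultimately have "dacute u ((I - R) - {x})" using dacute_remove insert.prems(2) by blast
  moreover have "(I - R) - {x} = I - insert x R" by auto
  ultimately show ?case by simp
qed

lemma dacute_base:
  fixes a :: "nat \<Rightarrow> 'a::euclidean_space"
  assumes fin: "finite K" and q: "q \<in> K" and r: "r \<in> K" and rq: "r \<noteq> q"
    and da: "dacute (\<lambda>m. a m - a q) (K - {q})"
  shows "dacute (\<lambda>m. a m - a r) (K - {r})"
proof -
  define I where "I = K - {q}"
  define I' where "I' = K - {r}"
  define u where "u = (\<lambda>m. a m - a q)"
  define u' where "u' = (\<lambda>m. a m - a r)"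
  have finI: "finite I" using fin by (simp add: I_def)
  have rI: "r \<in> I" and qI': "q \<in> I'" using r q rq by (auto simp: I_def I'_def)
  obtain d where D1: "\<forall>i\<in>I. d i \<in> span (u ` I)" and D2: "\<forall>i\<in>I. \<forall>l\<in>I. d i \<bullet> u l = (if i = l then 1 else 0)"
     and D3: "\<forall>i\<in>I. \<forall>l\<in>I. i \<noteq> l \<longrightarrow> d i \<bullet> d l < 0" and D4: "\<forall>i\<in>I. d i \<bullet> (\<Sum>l\<in>I. d l) > 0"
    using da unfolding dacute_def I_def[symmetric] u_def[symmetric] by blast
  define D where "D = (\<Sum>l\<in>I. d l)"
  define e where "e m = (if m = q then - D else d m)" for m
  have DU: "D \<bullet> u l = 1" if "l \<in> I" for l
  proof -
    have "D \<bullet> u l = (\<Sum>m\<in>I. d m \<bullet> u l)" by (simp add: D_def inner_sum_left)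
    also have "\<dots> = (\<Sum>m\<in>I. if m = l then 1 else 0)" using D2 that by (intro sum.cong) auto
    also have "\<dots> = 1" using finI that by simp
    finally show ?thesis .
  qed
  have uu: "u m = u' m - u' q" for m by (simp add: u_def u'_def)
  have ur: "u r = - u' q" by (simp add: u_def u'_def)
  have sub: "span (u ` I) \<subseteq> span (u' ` I')"
  proof (rule span_minimal[OF _ subspace_span], rule subsetI)
    fix x assume "x \<in> u ` I"
    then obtain m where m: "m \<in> I" "x = u m" by auto
    show "x \<in> span (u' ` I')"
    proof (cases "m = r")
      case True then show ?thesis using m ur span_neg[OF span_base[OF imageI[of q I' u']]] qI' by simp
    next
      case False
      then have "m \<in> I'" using m by (auto simp: I_def I'_def)
      then show ?thesis using m uu[of m] span_diff[OF span_base[OF imageI[of m I' u']] span_base[OF imageI[of q I' u']]] qI' by simp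
    qed
  qed
  have E1: "\<forall>i\<in>I'. e i \<in> span (u' ` I')"
  proof
    fix i assume i: "i \<in> I'"
    have "D \<in> span (u ` I)" unfolding D_def using D1 by (auto intro!: span_sum)
    then have "e i \<in> span (u ` I)" using D1 i by (auto simp: e_def I_def I'_def intro: span_neg)
    then show "e i \<in> span (u' ` I')" using sub by blast
  qed
  have E2: "\<forall>i\<in>I'. \<forall>l\<in>I'. e i \<bullet> u' l = (if i = l then 1 else 0)"
  proof (intro ballI)
    fix i l assume i: "i \<in> I'" and l: "l \<in> I'"
    have u'q: "u' q = - u r" by (simp add: u_def u'_def)
    have u'l: "u' l = u l - u r" by (simp add: u_def u'_def)
    show "e i \<bullet> u' l = (if i = l then 1 else 0)"
    proof (cases "i = q")
      case True
      show ?thesis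
      proof (cases "l = q")
        case True then show ?thesis using \<open>i = q\<close> DU[OF rI] by (simp add: e_def u'q)
      next
        case False
        then have "l \<in> I" using l by (auto simp: I_def I'_def)
        then show ?thesis using \<open>i = q\<close> False DU[OF rI] DU[of l] by (simp add: e_def u'l inner_diff_right)
      qed
    next
      case False
      then have iI: "i \<in> I" and ir: "i \<noteq> r" using i by (auto simp: I_def I'_def)
      show ?thesis
      proof (cases "l = q")
        case True then show ?thesis using False iI ir D2 rI by (simp add: e_def u'q)
      next
        case lq: False
        then have "l \<in> I" using l by (auto simp: I_def I'_def)
        then show ?thesis using False iI ir D2 rI by (simp add: e_def u'l inner_diff_right)
      qed
    qed
  qed
  have E3: "\<forall>i\<in>I'. \<forall>l\<in>I'. i \<noteq> l \<longrightarrow> e i \<bullet> e l < 0"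
  proof (intro ballI impI)
    fix i l assume i: "i \<in> I'" and l: "l \<in> I'" and il: "i \<noteq> l"
    show "e i \<bullet> e l < 0"
    proof (cases "i = q")
      case True
      then have "l \<in> I" using l il by (auto simp: I_def I'_def)
      then show ?thesis using True il D4 by (simp add: e_def D_def inner_commute)
    next
      case False
      then have iI: "i \<in> I" using i by (auto simp: I_def I'_def)
      show ?thesis
      proof (cases "l = q")
        case True then show ?thesis using False iI D4 by (simp add: e_def D_def)
      next
        case lq: False
        then have "l \<in> I" using l by (auto simp: I_def I'_def)
        then show ?thesis using False lq iI D3 il by (simp add: e_def)
      qed
    qed
  qed
  have I'eq: "I' = insert q (I - {r})" using q r rq by (auto simp: I_def I'_def)
  have Esum: "(\<Sum>l\<in>I'. e l) = - d r"
  proof -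
    have "(\<Sum>l\<in>I'. e l) = e q + (\<Sum>l\<in>I - {r}. e l)" using finI by (simp add: I'eq I_def)
    also have "(\<Sum>l\<in>I - {r}. e l) = (\<Sum>l\<in>I - {r}. d l)" by (intro sum.cong) (auto simp: e_def I_def)
    also have "\<dots> = D - d r" using finI rI by (simp add: D_def sum.remove)
    finally show ?thesis by (simp add: e_def)
  qed
  have E4: "\<forall>i\<in>I'. e i \<bullet> (\<Sum>l\<in>I'. e l) > 0"
  proof
    fix i assume i: "i \<in> I'"
    show "e i \<bullet> (\<Sum>l\<in>I'. e l) > 0"
    proof (cases "i = q")
      case True
      then have "e i \<bullet> (\<Sum>l\<in>I'. e l) = d r \<bullet> D" unfolding Esum by (simp add: e_def inner_commute)
      then show ?thesis using D4 rI by (simp add: D_def)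
    next
      case False
      then have iI: "i \<in> I" and ir: "i \<noteq> r" using i by (auto simp: I_def I'_def)
      then have "e i \<bullet> (\<Sum>l\<in>I'. e l) = - (d i \<bullet> d r)" unfolding Esum using False by (simp add: e_def)
      then show ?thesis using D3 rI iI ir by simp
    qed
  qed
  have "dacute u' I'" unfolding dacute_def using E1 E2 E3 E4 by blast
  then show ?thesis unfolding I'_def u'_def .
qed

lemma dacute_reindex:
  fixes u :: "nat \<Rightarrow> 'a::euclidean_space"
  assumes "dacute u I" and h: "bij_betw h J I"
  shows "dacute (u \<circ> h) J"
proof -
  obtain d where D1: "\<forall>i\<in>I. d i \<in> span (u ` I)" and D2: "\<forall>i\<in>I. \<forall>l\<in>I. d i \<bullet> u l = (if i = l then 1 else 0)"
     and D3: "\<forall>i\<in>I. \<forall>l\<in>I. i \<noteq> l \<longrightarrow> d i \<bullet> d l < 0" and D4: "\<forall>i\<in>I. d i \<bullet> (\<Sum>l\<in>I. d l) > 0"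
    using assms(1) unfolding dacute_def by blast
  have img: "(u \<circ> h) ` J = u ` I" using h by (auto simp: bij_betw_def image_comp[symmetric])
  have hJ: "\<And>i. i \<in> J \<Longrightarrow> h i \<in> I" using h by (auto simp: bij_betw_def)
  have inj: "\<And>i l. i \<in> J \<Longrightarrow> l \<in> J \<Longrightarrow> h i = h l \<Longrightarrow> i = l" using h by (auto simp: bij_betw_def inj_on_def)
  have sm: "(\<Sum>l\<in>J. d (h l)) = (\<Sum>l\<in>I. d l)" using sum.reindex_bij_betw[OF h] by simp
  have "\<forall>i\<in>J. (d \<circ> h) i \<in> span ((u \<circ> h) ` J)" using D1 hJ img by auto
  moreover have "\<forall>i\<in>J. \<forall>l\<in>J. (d \<circ> h) i \<bullet> (u \<circ> h) l = (if i = l then 1 else 0)"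
    using D2 hJ inj by auto
  moreover have "\<forall>i\<in>J. \<forall>l\<in>J. i \<noteq> l \<longrightarrow> (d \<circ> h) i \<bullet> (d \<circ> h) l < 0"
    using D3 hJ inj by (simp) (metis)
  moreover have "\<forall>i\<in>J. (d \<circ> h) i \<bullet> (\<Sum>l\<in>J. (d \<circ> h) l) > 0"
    using D4 hJ sm by auto
  ultimately show ?thesis unfolding dacute_def by blast
qed


lemma dacute_cong:
  fixes u v :: "nat \<Rightarrow> 'a::euclidean_space"
  assumes "\<And>m. m \<in> I \<Longrightarrow> u m = v m" and "dacute u I"
  shows "dacute v I"
proof -
  have img: "u ` I = v ` I" using assms(1) by auto
  obtain d where "\<forall>i\<in>I. d i \<in> span (u ` I)" "\<forall>i\<in>I. \<forall>l\<in>I. d i \<bullet> u l = (if i = l then 1 else 0)"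
     "\<forall>i\<in>I. \<forall>l\<in>I. i \<noteq> l \<longrightarrow> d i \<bullet> d l < 0" "\<forall>i\<in>I. d i \<bullet> (\<Sum>l\<in>I. d l) > 0"
    using assms(2) unfolding dacute_def by blast
  then show ?thesis unfolding dacute_def img using assms(1) by auto
qed

theorem theorem5p12:
  fixes S S' :: "(real ^ 'n) set" and k :: nat
  assumes "acute_01_simplex S"
    and "card S = k"
    and "acute_01_simplex S'"
    and "\<exists>T. T \<subseteq> S' \<and> T \<noteq> {} \<and> convex hull S = convex hull T"
  shows "\<forall>v \<in> S'. v \<in> S \<or> v \<in> acute_ext S"
proof
  fix v assume vS': "v \<in> S'"
  obtain T where T: "T \<subseteq> S'" "T \<noteq> {}" "convex hull S = convex hull T" using assms(4) by blast
  have S: "finite S" "S \<noteq> {}" "S \<subseteq> zero_one_points" "\<not> affine_dependent S"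
    using assms(1) unfolding acute_01_simplex_def by auto
  obtain a where abij: "bij_betw a {0..card S' - 1} S'" and ga: "gram_acute a (card S' - 1)"
    and S': "finite S'" "S' \<noteq> {}" "S' \<subseteq> zero_one_points" "\<not> affine_dependent S'"
    using assms(3) unfolding acute_01_simplex_def by auto
  have Tind: "\<not> affine_dependent T" using affine_independent_subset[OF S'(4) T(1)] .
  have "S = T"
  proof -
    have "x \<in> S \<longleftrightarrow> x \<in> T" for x
      using extreme_point_of_convex_hull_affine_independent[OF S(4), of x]
            extreme_point_of_convex_hull_affine_independent[OF Tind, of x] T(3) by simp
    then show ?thesis by blast
  qed
  then have SS': "S \<subseteq> S'" using T by simp
  show "v \<in> S \<or> v \<in> acute_ext S"
  proof (cases "v \<in> S")
    case True then show ?thesis by simp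
  next
    case vS: False
    define F where "F = insert v S"
    define N where "N = card S' - 1"
    define K where "K = {0..N}"
    have FS': "F \<subseteq> S'" using SS' vS' by (simp add: F_def)
    have finF: "finite F" using S by (simp add: F_def)
    have injK: "inj_on a K" and aK: "a ` K = S'" using abij by (auto simp: bij_betw_def K_def N_def)
    have finK: "finite K" by (simp add: K_def)
    have "gram' (\<lambda>i. a (Suc i) - a 0) {..<N}" using ga gram_acute_eq[of a N] by (simp add: N_def)
    then have d0: "dacute (\<lambda>i. a (Suc i) - a 0) {..<N}" using gram'_dacute by blast
    have hb: "bij_betw (\<lambda>m. m - 1) {1..N} {..<N}"
      by (rule bij_betw_byWitness[where f'=Suc]) auto
    have "dacute ((\<lambda>i. a (Suc i) - a 0) \<circ> (\<lambda>m. m - 1)) {1..N}" using dacute_reindex[OF d0 hb] .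
    then have "dacute (\<lambda>m. a m - a 0) {1..N}" by (rule dacute_cong[rotated]) auto
    moreover have "{1..N} = K - {0}" by (auto simp: K_def)
    ultimately have d1: "dacute (\<lambda>m. a m - a 0) (K - {0})" by simp
    obtain r where r: "r \<in> K" "a r = v" using vS' aK by auto
    have d2: "dacute (\<lambda>m. a m - a r) (K - {r})"
    proof (cases "r = 0")
      case True then show ?thesis using d1 by simp
    next
      case False then show ?thesis using dacute_base[OF finK _ r(1) False d1] by (simp add: K_def)
    qed
    define K' where "K' = {m \<in> K. a m \<in> F}"
    have rK': "r \<in> K'" using r by (simp add: K'_def F_def)
    have "dacute (\<lambda>m. a m - a r) ((K - {r}) - (K - K'))"
      by (rule dacute_subset) (use d2 finK rK' in auto)
    moreover have "(K - {r}) - (K - K') = K' - {r}" by (auto simp: K'_def)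
    ultimately have d3: "dacute (\<lambda>m. a m - a r) (K' - {r})" by simp
    have aK': "a ` K' = F" using aK FS' by (auto simp: K'_def)
    have "inj_on a K'" using injK by (rule inj_on_subset) (auto simp: K'_def)
    then have cardK': "card K' = card F" using aK' card_image[of a K'] by simp
    have cF: "card F \<ge> 1" using finF by (simp add: F_def Suc_le_eq card_gt_0_iff)
    define J where "J = {..<card F - 1}"
    have "card (K' - {r}) = card J" using rK' cardK' finK by (simp add: J_def K'_def)
    then obtain h where h: "bij_betw h J (K' - {r})"
      using finite_same_card_bij[of J "K' - {r}"] finK by (auto simp: J_def K'_def)
    have d4: "dacute ((\<lambda>m. a m - a r) \<circ> h) J" using dacute_reindex[OF d3 h] .
    define a' where "a' i = (if i = 0 then v else a (h (i - 1)))" for i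
    have "(\<lambda>i. a' (Suc i) - a' 0) = (\<lambda>m. a m - a r) \<circ> h" using r by (auto simp: a'_def)
    then have "dacute (\<lambda>i. a' (Suc i) - a' 0) {..<card F - 1}" using d4 by (simp add: J_def)
    then have "gram' (\<lambda>i. a' (Suc i) - a' 0) {..<card F - 1}" using gram'_dacute by blast
    then have ga': "gram_acute a' (card F - 1)" using gram_acute_eq[of a' "card F - 1"] by simp
    have hJ: "\<And>j. j \<in> J \<Longrightarrow> h j \<in> K' - {r}" and hsurj: "h ` J = K' - {r}" using h by (auto simp: bij_betw_def)
    have img: "a' ` {0..card F - 1} = F"
    proof
      show "a' ` {0..card F - 1} \<subseteq> F"
      proof
        fix y assume "y \<in> a' ` {0..card F - 1}"
        then obtain x where x: "x \<le> card F - 1" "y = a' x" by auto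
        show "y \<in> F"
        proof (cases "x = 0")
          case True then show ?thesis using x by (simp add: a'_def F_def)
        next
          case False
          then have "x - 1 \<in> J" using x by (auto simp: J_def)
          then show ?thesis using hJ[of "x - 1"] x False by (auto simp: a'_def K'_def)
        qed
      qed
    next
      show "F \<subseteq> a' ` {0..card F - 1}"
      proof
        fix y assume yF: "y \<in> F"
        show "y \<in> a' ` {0..card F - 1}"
        proof (cases "y = v")
          case True then show ?thesis by (force simp: a'_def)
        next
          case False
          then obtain m where m: "m \<in> K'" "a m = y" using aK' yF by auto
          then have "m \<noteq> r" using r False by auto
          then have "m \<in> h ` J" using hsurj m by auto
          then obtain j where j: "j \<in> J" "h j = m" by blast
          then have "a' (Suc j) = y" using m by (simp add: a'_def)
          moreover have "Suc j \<in> {0..card F - 1}" using j by (auto simp: J_def)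
          ultimately show ?thesis by force
        qed
      qed
    qed
    have "card {0..card F - 1} = card F" using cF by simp
    then have "inj_on a' {0..card F - 1}" using img finF by (intro eq_card_imp_inj_on) auto
    then have bij': "bij_betw a' {0..card F - 1} F" using img by (simp add: bij_betw_def)
    have "acute_01_simplex F"
      unfolding acute_01_simplex_def
      using finF FS' S'(3) affine_independent_subset[OF S'(4) FS'] bij' ga' by (auto simp: F_def)
    then have "v \<in> acute_ext S" using vS vS' S'(3) by (auto simp: acute_ext_def F_def)
    then show ?thesis by simp
  qed
qed

end
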